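(* Let $\Gamma$ be a group and let $\mathcal{S}$ be a Gr-category of the type $(\Pi,A)$. Then every factor set $(\theta,F)$ on $\Gamma$ with coefficients in $\mathcal{S}$ is cohomologous to an enough strict factor set $(\mu,G)$ on $\Gamma$ with coefficients in $\mathcal{S}$.
   Context: Let $\Pi$ be a group and $A$ a left $\Pi$-module. A Gr-category of the type $(\Pi,A)$, $\mathcal{S}(\Pi,A,\xi)$, has as objects the elements of $\Pi$, only automorphisms as morphisms, $\mathrm{Aut}(x)=\{x\}\times A$, composition $(x,u)\circ(x,v)=(x,u+v)$, tensor $x\otimes y=xy$, $(x,u)\otimes(y,v)=(xy,u+xv)$, associativity constraint $a_{x,y,z}=(xyz,\xi(x,y,z))$ for a normalized 3-cocycle $\xi\in Z^3(\Pi,A)$, and strict unit constraints (unit object $I=1$). A monoidal functor is $F=(F,\widetilde F,\widehat F)$ with $\widetilde F_{x,y}:F(x\otimes y)\to F(x)\otimes F(y)$ and $\widehat F:F(I)\to I$. A factor set on $\Gamma$ with coefficients in $\mathcal{S}$ is a pair $(\theta,F)$: monoidal autoequivalences $F^\sigma:\mathcal{S}\to\mathcal{S}$ ($\sigma\in\Gamma$) and isomorphisms of monoidal functors $\theta^{\sigma,\tau}:F^\sigma F^\tau\to F^{\sigma\tau}$, such that $F^1=\mathrm{id}$, $\theta^{1,\sigma}=\mathrm{id}_{F^\sigma}=\theta^{\sigma,1}$, and $\theta^{\sigma\tau,\gamma}\circ(\theta^{\sigma,\tau}F^\gamma)=\theta^{\sigma,\tau\gamma}\circ(F^\sigma\theta^{\tau,\gamma})$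 for all $\sigma,\tau,\gamma$. A factor set $(\theta,F)$ is enough strict if $\widehat{F^\sigma}=\mathrm{id}_I$ for all $\sigma\in\Gamma$. Two factor sets $(\theta,F)$, $(\mu,G)$ are cohomologous if there is a family of isomorphisms of monoidal functors $u^\sigma:F^\sigma\to G^\sigma$ ($\sigma\in\Gamma$) with $u^1=\mathrm{id}$ and $u^{\sigma\tau}\circ\theta^{\sigma,\tau}=\mu^{\sigma,\tau}\circ(u^\sigma G^\tau)\circ(F^\sigma u^\tau)$ for all $\sigma,\tau\in\Gamma$. *)

theory Defs
  imports "HOL-Algebra.Group"
begin

text \<open>
  Concrete encoding of the Gr-category S(Pi, A, xi).
  Pi is a (multiplicative) group given as a HOL-Algebra structure P; A is an
  abelian group given as a type 'a of class ab_group_add; the left Pi-module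
  structure is act :: 'p => 'a => 'a.  Objects of S are the elements of
  carrier P; the only morphisms are automorphisms (x,u), u in A, so a morphism
  is recorded by its underlying element u of A (its object being clear).
  Composition is addition, (x,u) tensor (y,v) = (xy, u + act x v),
  a_{x,y,z} = (xyz, xi x y z), strict unit constraints.
\<close>

definition left_module :: "'p monoid \<Rightarrow> ('p \<Rightarrow> 'a::ab_group_add \<Rightarrow> 'a) \<Rightarrow> bool" where
  "left_module P act \<longleftrightarrow> group P
     \<and> (\<forall>x\<in>carrier P. \<forall>u v. act x (u + v) = act x u + act x v)
     \<and> (\<forall>u. act \<one>\<^bsub>P\<^esub> u = u)
     \<and> (\<forall>x\<in>carrier P. \<forall>y\<in>carrier P. \<forall>u. act (x \<otimes>\<^bsub>P\<^esub> y) u = act x (act y u))"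

definition normalized_3cocycle ::
  "'p monoid \<Rightarrow> ('p \<Rightarrow> 'a::ab_group_add \<Rightarrow> 'a) \<Rightarrow> ('p \<Rightarrow> 'p \<Rightarrow> 'p \<Rightarrow> 'a) \<Rightarrow> bool" where
  "normalized_3cocycle P act \<xi> \<longleftrightarrow>
     (\<forall>x\<in>carrier P. \<forall>y\<in>carrier P. \<forall>z\<in>carrier P. \<forall>t\<in>carrier P.
        act x (\<xi> y z t) - \<xi> (x \<otimes>\<^bsub>P\<^esub> y) z t + \<xi> x (y \<otimes>\<^bsub>P\<^esub> z) t
        - \<xi> x y (z \<otimes>\<^bsub>P\<^esub> t) + \<xi> x y z = 0)
   \<and> (\<forall>x\<in>carrier P. \<forall>y\<in>carrier P.
        \<xi> \<one>\<^bsub>P\<^esub> x y = 0 \<and> \<xi> x \<one>\<^bsub>P\<^esub> y = 0 \<and> \<xi> x y \<one>\<^bsub>P\<^esub> = 0)"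

text \<open>
  Data of a (monoidal) functor S -> S:
  mf_obj x = F(x);  mf_mor x u = the A-component of F(x,u) : F x -> F x;
  mf_tld x y = A-component of F~_{x,y} : F(xy) -> F(x)F(y)  (forces F(xy) = F(x)F(y));
  mf_hat = A-component of F^ : F(1) -> 1  (forces F(1) = 1).
\<close>

record ('p, 'a) mfun =
  mf_obj :: "'p \<Rightarrow> 'p"
  mf_mor :: "'p \<Rightarrow> 'a \<Rightarrow> 'a"
  mf_tld :: "'p \<Rightarrow> 'p \<Rightarrow> 'a"
  mf_hat :: "'a"

definition monoidal_functor ::
  "'p monoid \<Rightarrow> ('p \<Rightarrow> 'a::ab_group_add \<Rightarrow> 'a) \<Rightarrow> ('p \<Rightarrow> 'p \<Rightarrow> 'p \<Rightarrow> 'a) \<Rightarrow> ('p, 'a) mfun \<Rightarrow> bool" where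
  "monoidal_functor P act \<xi> F \<longleftrightarrow>
     \<comment> \<open>F is a functor S -> S\<close>
     (\<forall>x\<in>carrier P. mf_obj F x \<in> carrier P)
   \<and> (\<forall>x\<in>carrier P. \<forall>u v. mf_mor F x (u + v) = mf_mor F x u + mf_mor F x v)
     \<comment> \<open>F~_{x,y} : F(xy) -> F(x)F(y) and F^ : F(I) -> I are morphisms of S\<close>
   \<and> (\<forall>x\<in>carrier P. \<forall>y\<in>carrier P. mf_obj F (x \<otimes>\<^bsub>P\<^esub> y) = mf_obj F x \<otimes>\<^bsub>P\<^esub> mf_obj F y)
   \<and> mf_obj F \<one>\<^bsub>P\<^esub> = \<one>\<^bsub>P\<^esub>
     \<comment> \<open>naturality of F~ :  F~ o F((x,u) tensor (y,v)) = (F(x,u) tensor F(y,v)) o F~\<close>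
   \<and> (\<forall>x\<in>carrier P. \<forall>y\<in>carrier P. \<forall>u v.
        mf_tld F x y + mf_mor F (x \<otimes>\<^bsub>P\<^esub> y) (u + act x v)
        = (mf_mor F x u + act (mf_obj F x) (mf_mor F y v)) + mf_tld F x y)
     \<comment> \<open>compatibility with the associativity constraints\<close>
   \<and> (\<forall>x\<in>carrier P. \<forall>y\<in>carrier P. \<forall>z\<in>carrier P.
        \<xi> (mf_obj F x) (mf_obj F y) (mf_obj F z)
          + act (mf_obj F x) (mf_tld F y z) + mf_tld F x (y \<otimes>\<^bsub>P\<^esub> z)
        = mf_tld F x y + mf_tld F (x \<otimes>\<^bsub>P\<^esub> y) z
          + mf_mor F (x \<otimes>\<^bsub>P\<^esub> y \<otimes>\<^bsub>P\<^esub> z) (\<xi> x y z))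
     \<comment> \<open>compatibility with the (strict) unit constraints:
         F(l_x) = l_{Fx} o (F^ tensor id) o F~_{1,x},  F(r_x) = r_{Fx} o (id tensor F^) o F~_{x,1}\<close>
   \<and> (\<forall>x\<in>carrier P. mf_hat F + mf_tld F \<one>\<^bsub>P\<^esub> x = 0)
   \<and> (\<forall>x\<in>carrier P. act (mf_obj F x) (mf_hat F) + mf_tld F x \<one>\<^bsub>P\<^esub> = 0)"

text \<open>A monoidal autoequivalence: a monoidal functor that is an equivalence, i.e.
  fully faithful and essentially surjective.  Since S is skeletal with only
  automorphisms, this means: bijective on objects and bijective on each Aut(x).\<close>

definition monoidal_autoequiv ::
  "'p monoid \<Rightarrow> ('p \<Rightarrow> 'a::ab_group_add \<Rightarrow> 'a) \<Rightarrow> ('p \<Rightarrow> 'p \<Rightarrow> 'p \<Rightarrow> 'a) \<Rightarrow> ('p, 'a) mfun \<Rightarrow> bool" where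
  "monoidal_autoequiv P act \<xi> F \<longleftrightarrow>
     monoidal_functor P act \<xi> F
   \<and> bij_betw (mf_obj F) (carrier P) (carrier P)
   \<and> (\<forall>x\<in>carrier P. bij (mf_mor F x))"

text \<open>Morphism (= isomorphism, all morphisms of S being invertible) of monoidal
  functors F -> G with components t x : F x -> G x.\<close>

definition mnat ::
  "'p monoid \<Rightarrow> ('p \<Rightarrow> 'a::ab_group_add \<Rightarrow> 'a) \<Rightarrow> ('p, 'a) mfun \<Rightarrow> ('p, 'a) mfun \<Rightarrow> ('p \<Rightarrow> 'a) \<Rightarrow> bool" where
  "mnat P act F G t \<longleftrightarrow>
     (\<forall>x\<in>carrier P. mf_obj F x = mf_obj G x)
   \<and> (\<forall>x\<in>carrier P. \<forall>u. t x + mf_mor F x u = mf_mor G x u + t x)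
   \<and> (\<forall>x\<in>carrier P. \<forall>y\<in>carrier P.
        mf_tld G x y + t (x \<otimes>\<^bsub>P\<^esub> y) = (t x + act (mf_obj F x) (t y)) + mf_tld F x y)
   \<and> mf_hat G + t \<one>\<^bsub>P\<^esub> = mf_hat F"

text \<open>Composition F G of monoidal functors (apply G first):
  (FG)~_{x,y} = F~_{Gx,Gy} o F(G~_{x,y}),  (FG)^ = F^ o F(G^).\<close>

definition mf_comp :: "'p monoid \<Rightarrow> ('p, 'a::ab_group_add) mfun \<Rightarrow> ('p, 'a) mfun \<Rightarrow> ('p, 'a) mfun" where
  "mf_comp P F G =
     \<lparr> mf_obj = (\<lambda>x. mf_obj F (mf_obj G x)),
       mf_mor = (\<lambda>x u. mf_mor F (mf_obj G x) (mf_mor G x u)),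
       mf_tld = (\<lambda>x y. mf_tld F (mf_obj G x) (mf_obj G y)
                        + mf_mor F (mf_obj G (x \<otimes>\<^bsub>P\<^esub> y)) (mf_tld G x y)),
       mf_hat = mf_hat F + mf_mor F (mf_obj G \<one>\<^bsub>P\<^esub>) (mf_hat G) \<rparr>"

definition mf_id :: "('p, 'a::ab_group_add) mfun" where
  "mf_id = \<lparr> mf_obj = (\<lambda>x. x), mf_mor = (\<lambda>x u. u), mf_tld = (\<lambda>x y. 0), mf_hat = 0 \<rparr>"

definition mf_eq_on :: "'p monoid \<Rightarrow> ('p, 'a) mfun \<Rightarrow> ('p, 'a) mfun \<Rightarrow> bool" where
  "mf_eq_on P F G \<longleftrightarrow>
     (\<forall>x\<in>carrier P. mf_obj F x = mf_obj G x)
   \<and> (\<forall>x\<in>carrier P. \<forall>u. mf_mor F x u = mf_mor G x u)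
   \<and> (\<forall>x\<in>carrier P. \<forall>y\<in>carrier P. mf_tld F x y = mf_tld G x y)
   \<and> mf_hat F = mf_hat G"

text \<open>Vertical composition t o s, right whiskering t K (components t_{K x}),
  left whiskering F t for t : G -> H (components F(t_x), t_x an automorphism of G x).\<close>

definition vcomp :: "('p \<Rightarrow> 'a::ab_group_add) \<Rightarrow> ('p \<Rightarrow> 'a) \<Rightarrow> 'p \<Rightarrow> 'a" where
  "vcomp t s = (\<lambda>x. t x + s x)"

definition whisk_r :: "('p \<Rightarrow> 'a) \<Rightarrow> ('p, 'a) mfun \<Rightarrow> 'p \<Rightarrow> 'a" where
  "whisk_r t K = (\<lambda>x. t (mf_obj K x))"

definition whisk_l :: "('p, 'a) mfun \<Rightarrow> ('p, 'a) mfun \<Rightarrow> ('p \<Rightarrow> 'a) \<Rightarrow> 'p \<Rightarrow> 'a" where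
  "whisk_l F G t = (\<lambda>x. mf_mor F (mf_obj G x) (t x))"

definition factor_set ::
  "'g monoid \<Rightarrow> 'p monoid \<Rightarrow> ('p \<Rightarrow> 'a::ab_group_add \<Rightarrow> 'a) \<Rightarrow> ('p \<Rightarrow> 'p \<Rightarrow> 'p \<Rightarrow> 'a)
   \<Rightarrow> ('g \<Rightarrow> 'g \<Rightarrow> 'p \<Rightarrow> 'a) \<Rightarrow> ('g \<Rightarrow> ('p, 'a) mfun) \<Rightarrow> bool" where
  "factor_set \<Gamma> P act \<xi> \<theta> F \<longleftrightarrow>
     (\<forall>\<sigma>\<in>carrier \<Gamma>. monoidal_autoequiv P act \<xi> (F \<sigma>))
   \<and> (\<forall>\<sigma>\<in>carrier \<Gamma>. \<forall>\<tau>\<in>carrier \<Gamma>.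
        mnat P act (mf_comp P (F \<sigma>) (F \<tau>)) (F (\<sigma> \<otimes>\<^bsub>\<Gamma>\<^esub> \<tau>)) (\<theta> \<sigma> \<tau>))
   \<and> mf_eq_on P (F \<one>\<^bsub>\<Gamma>\<^esub>) mf_id
   \<and> (\<forall>\<sigma>\<in>carrier \<Gamma>. \<forall>x\<in>carrier P. \<theta> \<one>\<^bsub>\<Gamma>\<^esub> \<sigma> x = 0 \<and> \<theta> \<sigma> \<one>\<^bsub>\<Gamma>\<^esub> x = 0)
   \<and> (\<forall>\<sigma>\<in>carrier \<Gamma>. \<forall>\<tau>\<in>carrier \<Gamma>. \<forall>\<gamma>\<in>carrier \<Gamma>. \<forall>x\<in>carrier P.
        vcomp (\<theta> (\<sigma> \<otimes>\<^bsub>\<Gamma>\<^esub> \<tau>) \<gamma>) (whisk_r (\<theta> \<sigma> \<tau>) (F \<gamma>)) x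
        = vcomp (\<theta> \<sigma> (\<tau> \<otimes>\<^bsub>\<Gamma>\<^esub> \<gamma>)) (whisk_l (F \<sigma>) (mf_comp P (F \<tau>) (F \<gamma>)) (\<theta> \<tau> \<gamma>)) x)"

definition enough_strict :: "'g monoid \<Rightarrow> ('g \<Rightarrow> ('p, 'a::zero) mfun) \<Rightarrow> bool" where
  "enough_strict \<Gamma> F \<longleftrightarrow> (\<forall>\<sigma>\<in>carrier \<Gamma>. mf_hat (F \<sigma>) = 0)"

definition cohomologous ::
  "'g monoid \<Rightarrow> 'p monoid \<Rightarrow> ('p \<Rightarrow> 'a::ab_group_add \<Rightarrow> 'a)
   \<Rightarrow> ('g \<Rightarrow> 'g \<Rightarrow> 'p \<Rightarrow> 'a) \<Rightarrow> ('g \<Rightarrow> ('p, 'a) mfun)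
   \<Rightarrow> ('g \<Rightarrow> 'g \<Rightarrow> 'p \<Rightarrow> 'a) \<Rightarrow> ('g \<Rightarrow> ('p, 'a) mfun) \<Rightarrow> bool" where
  "cohomologous \<Gamma> P act \<theta> F \<mu> G \<longleftrightarrow>
     (\<exists>u :: 'g \<Rightarrow> 'p \<Rightarrow> 'a.
        (\<forall>\<sigma>\<in>carrier \<Gamma>. mnat P act (F \<sigma>) (G \<sigma>) (u \<sigma>))
      \<and> (\<forall>x\<in>carrier P. u \<one>\<^bsub>\<Gamma>\<^esub> x = 0)
      \<and> (\<forall>\<sigma>\<in>carrier \<Gamma>. \<forall>\<tau>\<in>carrier \<Gamma>. \<forall>x\<in>carrier P.
           vcomp (u (\<sigma> \<otimes>\<^bsub>\<Gamma>\<^esub> \<tau>)) (\<theta> \<sigma> \<tau>) x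
           = vcomp (\<mu> \<sigma> \<tau>) (vcomp (whisk_r (u \<sigma>) (G \<tau>)) (whisk_l (F \<sigma>) (F \<tau>) (u \<tau>))) x))"

end

theory Submission
  imports Defs
begin

lemma mf_unf:
  assumes "monoidal_functor P act \<xi> F"
  shows "\<And>x. x\<in>carrier P \<Longrightarrow> mf_obj F x \<in> carrier P"
    and "\<And>x u v. x\<in>carrier P \<Longrightarrow> mf_mor F x (u + v) = mf_mor F x u + mf_mor F x v"
    and "\<And>x y. x\<in>carrier P \<Longrightarrow> y\<in>carrier P \<Longrightarrow> mf_obj F (x \<otimes>\<^bsub>P\<^esub> y) = mf_obj F x \<otimes>\<^bsub>P\<^esub> mf_obj F y"
    and "mf_obj F \<one>\<^bsub>P\<^esub> = \<one>\<^bsub>P\<^esub>"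
    and "\<And>x y u v. x\<in>carrier P \<Longrightarrow> y\<in>carrier P \<Longrightarrow>
        mf_tld F x y + mf_mor F (x \<otimes>\<^bsub>P\<^esub> y) (u + act x v)
        = (mf_mor F x u + act (mf_obj F x) (mf_mor F y v)) + mf_tld F x y"
    and "\<And>x y z. x\<in>carrier P \<Longrightarrow> y\<in>carrier P \<Longrightarrow> z\<in>carrier P \<Longrightarrow>
        \<xi> (mf_obj F x) (mf_obj F y) (mf_obj F z)
          + act (mf_obj F x) (mf_tld F y z) + mf_tld F x (y \<otimes>\<^bsub>P\<^esub> z)
        = mf_tld F x y + mf_tld F (x \<otimes>\<^bsub>P\<^esub> y) z
          + mf_mor F (x \<otimes>\<^bsub>P\<^esub> y \<otimes>\<^bsub>P\<^esub> z) (\<xi> x y z)"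
    and "\<And>x. x\<in>carrier P \<Longrightarrow> mf_hat F + mf_tld F \<one>\<^bsub>P\<^esub> x = 0"
    and "\<And>x. x\<in>carrier P \<Longrightarrow> act (mf_obj F x) (mf_hat F) + mf_tld F x \<one>\<^bsub>P\<^esub> = 0"
  using assms unfolding monoidal_functor_def by auto

lemma add_hom_neg:
  fixes f :: "'a::ab_group_add \<Rightarrow> 'b::ab_group_add"
  assumes "\<And>u v. f (u + v) = f u + f v"
  shows "f 0 = 0" "f (- u) = - f u" "f (u - v) = f u - f v"
proof -
  have "f (0 + 0) = f 0 + f 0" by (rule assms)
  thus z: "f 0 = 0" by simp
  have n: "f (- w) = - f w" for w
  proof -
    have "f (w + - w) = f w + f (- w)" by (rule assms)
    with z show ?thesis by (metis add.commute eq_neg_iff_add_eq_0)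
  qed
  thus "f (- u) = - f u" .
  have "f (u + - v) = f u + f (- v)" by (rule assms)
  thus "f (u - v) = f u - f v" using n[of v] by simp
qed

lemma mnat_unf:
  assumes "mnat P act F G t"
  shows "\<And>x. x\<in>carrier P \<Longrightarrow> mf_obj F x = mf_obj G x"
   and "\<And>x u. x\<in>carrier P \<Longrightarrow> t x + mf_mor F x u = mf_mor G x u + t x"
   and "\<And>x y. x\<in>carrier P \<Longrightarrow> y\<in>carrier P \<Longrightarrow>
        mf_tld G x y + t (x \<otimes>\<^bsub>P\<^esub> y) = (t x + act (mf_obj F x) (t y)) + mf_tld F x y"
   and "mf_hat G + t \<one>\<^bsub>P\<^esub> = mf_hat F"
  using assms unfolding mnat_def by auto

lemma eq_via:
  fixes a b c d :: "'a::ab_group_add"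
  assumes "c = d" "a - b = c - d" shows "a = b"
  using assms by simp

lemma eq_via2:
  fixes a b c d e f :: "'a::ab_group_add"
  assumes "c = d" "e = f" "a - b = (c - d) + (e - f)" shows "a = b"
  using assms by simp

theorem lemma3p3:
  fixes \<Gamma> :: "'g monoid" and P :: "'p monoid"
    and act :: "'p \<Rightarrow> 'a::ab_group_add \<Rightarrow> 'a"
    and \<xi> :: "'p \<Rightarrow> 'p \<Rightarrow> 'p \<Rightarrow> 'a"
    and \<theta> :: "'g \<Rightarrow> 'g \<Rightarrow> 'p \<Rightarrow> 'a" and F :: "'g \<Rightarrow> ('p, 'a) mfun"
  assumes "group \<Gamma>"
    and "left_module P act"
    and "normalized_3cocycle P act \<xi>"
    and "factor_set \<Gamma> P act \<xi> \<theta> F"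
  shows "\<exists>\<mu> G. factor_set \<Gamma> P act \<xi> \<mu> G \<and> enough_strict \<Gamma> G
               \<and> cohomologous \<Gamma> P act \<theta> F \<mu> G"
proof -
  note lm = assms(2)[unfolded left_module_def]
  have gP: "group P" using lm by blast
  have actadd: "\<And>x u v. x \<in> carrier P \<Longrightarrow> act x (u+v) = act x u + act x v" using lm by blast
  have act1: "\<And>u. act \<one>\<^bsub>P\<^esub> u = u" using lm by blast
  have actm: "\<And>x y u. x \<in> carrier P \<Longrightarrow> y \<in> carrier P \<Longrightarrow> act (x \<otimes>\<^bsub>P\<^esub> y) u = act x (act y u)"
    using lm by blast
  have actneg: "\<And>x u. x \<in> carrier P \<Longrightarrow> act x (- u) = - act x u"
    "\<And>x u v. x \<in> carrier P \<Longrightarrow> act x (u - v) = act x u - act x v"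
    "\<And>x. x \<in> carrier P \<Longrightarrow> act x 0 = 0"
    using add_hom_neg[of "act x" for x] actadd by blast+
  have gG: "group \<Gamma>" by (rule assms(1))
  note fs = assms(4)[unfolded factor_set_def]
  have ae: "\<And>\<sigma>. \<sigma> \<in> carrier \<Gamma> \<Longrightarrow> monoidal_autoequiv P act \<xi> (F \<sigma>)" using fs by blast
  have mf: "\<And>\<sigma>. \<sigma> \<in> carrier \<Gamma> \<Longrightarrow> monoidal_functor P act \<xi> (F \<sigma>)"
    using ae unfolding monoidal_autoequiv_def by blast
  have thn: "\<And>\<sigma> \<tau>. \<sigma> \<in> carrier \<Gamma> \<Longrightarrow> \<tau> \<in> carrier \<Gamma> \<Longrightarrow>
      mnat P act (mf_comp P (F \<sigma>) (F \<tau>)) (F (\<sigma> \<otimes>\<^bsub>\<Gamma>\<^esub> \<tau>)) (\<theta> \<sigma> \<tau>)" using fs by blast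
  have e1: "mf_eq_on P (F \<one>\<^bsub>\<Gamma>\<^esub>) mf_id" using fs by blast
  have th1: "\<And>\<sigma> x. \<sigma> \<in> carrier \<Gamma> \<Longrightarrow> x \<in> carrier P \<Longrightarrow> \<theta> \<one>\<^bsub>\<Gamma>\<^esub> \<sigma> x = 0 \<and> \<theta> \<sigma> \<one>\<^bsub>\<Gamma>\<^esub> x = 0"
    using fs by blast
  have cyc: "\<And>\<sigma> \<tau> \<gamma> x. \<sigma>\<in>carrier \<Gamma> \<Longrightarrow> \<tau>\<in>carrier \<Gamma> \<Longrightarrow> \<gamma>\<in>carrier \<Gamma> \<Longrightarrow> x\<in>carrier P \<Longrightarrow>
        vcomp (\<theta> (\<sigma> \<otimes>\<^bsub>\<Gamma>\<^esub> \<tau>) \<gamma>) (whisk_r (\<theta> \<sigma> \<tau>) (F \<gamma>)) x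
        = vcomp (\<theta> \<sigma> (\<tau> \<otimes>\<^bsub>\<Gamma>\<^esub> \<gamma>)) (whisk_l (F \<sigma>) (mf_comp P (F \<tau>) (F \<gamma>)) (\<theta> \<tau> \<gamma>)) x"
    using fs by blast
  have morneg: "\<And>\<sigma> x u. \<sigma> \<in> carrier \<Gamma> \<Longrightarrow> x \<in> carrier P \<Longrightarrow> mf_mor (F \<sigma>) x (- u) = - mf_mor (F \<sigma>) x u"
    "\<And>\<sigma> x u v. \<sigma> \<in> carrier \<Gamma> \<Longrightarrow> x \<in> carrier P \<Longrightarrow> mf_mor (F \<sigma>) x (u - v) = mf_mor (F \<sigma>) x u - mf_mor (F \<sigma>) x v"
    "\<And>\<sigma> x. \<sigma> \<in> carrier \<Gamma> \<Longrightarrow> x \<in> carrier P \<Longrightarrow> mf_mor (F \<sigma>) x 0 = 0"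
    using add_hom_neg[of "mf_mor (F \<sigma>) x" for \<sigma> x] mf_unf(2)[OF mf] by blast+
  have F1: "\<And>x. x \<in> carrier P \<Longrightarrow> mf_obj (F \<one>\<^bsub>\<Gamma>\<^esub>) x = x"
    "\<And>x u. x \<in> carrier P \<Longrightarrow> mf_mor (F \<one>\<^bsub>\<Gamma>\<^esub>) x u = u"
    "\<And>x y. x \<in> carrier P \<Longrightarrow> y \<in> carrier P \<Longrightarrow> mf_tld (F \<one>\<^bsub>\<Gamma>\<^esub>) x y = 0"
    "mf_hat (F \<one>\<^bsub>\<Gamma>\<^esub>) = 0"
    using e1 unfolding mf_eq_on_def mf_id_def by auto
  define h where "h = (\<lambda>\<sigma>. mf_hat (F \<sigma>))"
  define G where "G = (\<lambda>\<sigma>. F \<sigma>\<lparr>mf_tld := (\<lambda>x y. mf_tld (F \<sigma>) x y + act (mf_obj (F \<sigma>) x) (h \<sigma>)),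
                                   mf_hat := 0\<rparr>)"
  define \<mu> where "\<mu> = (\<lambda>\<sigma> \<tau> x. h (\<sigma> \<otimes>\<^bsub>\<Gamma>\<^esub> \<tau>) + \<theta> \<sigma> \<tau> x - h \<sigma>
                           - mf_mor (F \<sigma>) (mf_obj (F \<tau>) x) (h \<tau>))"
  have Gs: "\<And>\<sigma>. mf_obj (G \<sigma>) = mf_obj (F \<sigma>)" "\<And>\<sigma>. mf_mor (G \<sigma>) = mf_mor (F \<sigma>)"
    "\<And>\<sigma> x y. mf_tld (G \<sigma>) x y = mf_tld (F \<sigma>) x y + act (mf_obj (F \<sigma>) x) (h \<sigma>)"
    "\<And>\<sigma>. mf_hat (G \<sigma>) = 0"
    by (simp_all add: G_def)
  have h1: "h \<one>\<^bsub>\<Gamma>\<^esub> = 0" using F1(4) by (simp add: h_def)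
  have mfG: "monoidal_autoequiv P act \<xi> (G \<sigma>)" if s: "\<sigma> \<in> carrier \<Gamma>" for \<sigma>
  proof -
    note m = mf_unf[OF mf[OF s]]
    have am: "act (mf_obj (F \<sigma>) (x \<otimes>\<^bsub>P\<^esub> y)) w = act (mf_obj (F \<sigma>) x) (act (mf_obj (F \<sigma>) y) w)"
      if "x \<in> carrier P" "y \<in> carrier P" for x y w
      using that m(1,3) actm by simp
    have "monoidal_functor P act \<xi> (G \<sigma>)"
      unfolding monoidal_functor_def Gs
    proof (intro conjI ballI allI)
      fix x y u v assume xy: "x \<in> carrier P" "y \<in> carrier P"
      show "mf_tld (F \<sigma>) x y + act (mf_obj (F \<sigma>) x) (h \<sigma>) + mf_mor (F \<sigma>) (x \<otimes>\<^bsub>P\<^esub> y) (u + act x v) =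
        mf_mor (F \<sigma>) x u + act (mf_obj (F \<sigma>) x) (mf_mor (F \<sigma>) y v) + (mf_tld (F \<sigma>) x y + act (mf_obj (F \<sigma>) x) (h \<sigma>))"
        by (rule eq_via[OF m(5)[OF xy, of u v]]) (simp add: algebra_simps)
    next
      fix x y z assume xyz: "x \<in> carrier P" "y \<in> carrier P" "z \<in> carrier P"
      show "\<xi> (mf_obj (F \<sigma>) x) (mf_obj (F \<sigma>) y) (mf_obj (F \<sigma>) z) +
          act (mf_obj (F \<sigma>) x) (mf_tld (F \<sigma>) y z + act (mf_obj (F \<sigma>) y) (h \<sigma>)) +
          (mf_tld (F \<sigma>) x (y \<otimes>\<^bsub>P\<^esub> z) + act (mf_obj (F \<sigma>) x) (h \<sigma>)) =
          mf_tld (F \<sigma>) x y + act (mf_obj (F \<sigma>) x) (h \<sigma>) +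
          (mf_tld (F \<sigma>) (x \<otimes>\<^bsub>P\<^esub> y) z + act (mf_obj (F \<sigma>) (x \<otimes>\<^bsub>P\<^esub> y)) (h \<sigma>)) +
          mf_mor (F \<sigma>) (x \<otimes>\<^bsub>P\<^esub> y \<otimes>\<^bsub>P\<^esub> z) (\<xi> x y z)"
        by (rule eq_via[OF m(6)[OF xyz]]) (simp add: algebra_simps am xyz actadd m(1))
    next
      fix x assume x: "x \<in> carrier P"
      show "0 + (mf_tld (F \<sigma>) \<one>\<^bsub>P\<^esub> x + act (mf_obj (F \<sigma>) \<one>\<^bsub>P\<^esub>) (h \<sigma>)) = 0"
        using m(4) m(7)[OF x] act1 by (simp add: h_def add.commute)
    next
      fix x assume x: "x \<in> carrier P"
      show "act (mf_obj (F \<sigma>) x) 0 + (mf_tld (F \<sigma>) x \<one>\<^bsub>P\<^esub> + act (mf_obj (F \<sigma>) x) (h \<sigma>)) = 0"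
        using m(8)[OF x] actneg(3)[OF m(1)[OF x]] by (simp add: h_def add.commute)
    qed (use m in auto)
    then show ?thesis using ae[OF s] unfolding monoidal_autoequiv_def Gs by blast
  qed
  have mnG: "mnat P act (mf_comp P (G \<sigma>) (G \<tau>)) (G (\<sigma> \<otimes>\<^bsub>\<Gamma>\<^esub> \<tau>)) (\<mu> \<sigma> \<tau>)"
    if s: "\<sigma> \<in> carrier \<Gamma>" and t: "\<tau> \<in> carrier \<Gamma>" for \<sigma> \<tau>
  proof -
    note ms = mf_unf[OF mf[OF s]] and mt = mf_unf[OF mf[OF t]]
    note n = mnat_unf[OF thn[OF s t]]
    have ob: "mf_obj (F (\<sigma> \<otimes>\<^bsub>\<Gamma>\<^esub> \<tau>)) x = mf_obj (F \<sigma>) (mf_obj (F \<tau>) x)" if "x \<in> carrier P" for x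
      using n(1)[OF that] by (simp add: mf_comp_def)
    show ?thesis unfolding mnat_def
    proof (intro conjI ballI allI)
      fix x assume x: "x \<in> carrier P"
      show "mf_obj (mf_comp P (G \<sigma>) (G \<tau>)) x = mf_obj (G (\<sigma> \<otimes>\<^bsub>\<Gamma>\<^esub> \<tau>)) x"
        using ob[OF x] by (simp add: mf_comp_def Gs)
      fix u
      show "\<mu> \<sigma> \<tau> x + mf_mor (mf_comp P (G \<sigma>) (G \<tau>)) x u = mf_mor (G (\<sigma> \<otimes>\<^bsub>\<Gamma>\<^esub> \<tau>)) x u + \<mu> \<sigma> \<tau> x"
        unfolding mf_comp_def Gs \<mu>_def
        by (rule eq_via[OF n(2)[OF x, of u]]) (simp add: mf_comp_def algebra_simps)
    next
      fix x y assume x: "x \<in> carrier P" and y: "y \<in> carrier P"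
      have X: "mf_obj (F \<tau>) x \<in> carrier P" and Y: "mf_obj (F \<tau>) y \<in> carrier P" using mt(1) x y by auto
      have A: "mf_obj (F \<sigma>) (mf_obj (F \<tau>) x) \<in> carrier P" using ms(1) X by auto
      have XY: "mf_obj (F \<tau>) x \<otimes>\<^bsub>P\<^esub> mf_obj (F \<tau>) y \<in> carrier P"
        using X Y gP by (simp add: group.is_monoid monoid.m_closed)
      show "mf_tld (G (\<sigma> \<otimes>\<^bsub>\<Gamma>\<^esub> \<tau>)) x y + \<mu> \<sigma> \<tau> (x \<otimes>\<^bsub>P\<^esub> y) =
         \<mu> \<sigma> \<tau> x + act (mf_obj (mf_comp P (G \<sigma>) (G \<tau>)) x) (\<mu> \<sigma> \<tau> y) + mf_tld (mf_comp P (G \<sigma>) (G \<tau>)) x y"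
        unfolding mf_comp_def Gs \<mu>_def
        by (rule eq_via2[OF n(3)[OF x y] ms(5)[OF X Y, of "h \<tau>" "h \<tau>", symmetric]])
          (simp add: mf_comp_def algebra_simps ob x y X Y A XY mt(3) actadd actneg ms(2) morneg s t
             ms(1) mt(1))
    next
      show "mf_hat (G (\<sigma> \<otimes>\<^bsub>\<Gamma>\<^esub> \<tau>)) + \<mu> \<sigma> \<tau> \<one>\<^bsub>P\<^esub> = mf_hat (mf_comp P (G \<sigma>) (G \<tau>))"
        unfolding mf_comp_def Gs \<mu>_def using n(4) mt(4) morneg(3)[OF s] monoid.one_closed[OF group.is_monoid[OF gP]]
        by (simp add: mf_comp_def h_def algebra_simps)
    qed
  qed
  have fsG: "factor_set \<Gamma> P act \<xi> \<mu> G"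
    unfolding factor_set_def
  proof (intro conjI ballI)
    show "mf_eq_on P (G \<one>\<^bsub>\<Gamma>\<^esub>) mf_id"
      using e1 h1 actneg(3) F1(1) unfolding mf_eq_on_def mf_id_def Gs by auto
  next
    fix \<sigma> x assume s: "\<sigma> \<in> carrier \<Gamma>" and x: "x \<in> carrier P"
    have o: "\<one>\<^bsub>\<Gamma>\<^esub> \<in> carrier \<Gamma>" by (simp add: gG group.is_monoid monoid.one_closed)
    have X: "mf_obj (F \<sigma>) x \<in> carrier P" using mf_unf(1)[OF mf[OF s] x] .
    show "\<mu> \<one>\<^bsub>\<Gamma>\<^esub> \<sigma> x = 0" using th1[OF s x] F1(2)[OF X] h1 s gG
      by (simp add: \<mu>_def group.is_monoid)
    show "\<mu> \<sigma> \<one>\<^bsub>\<Gamma>\<^esub> x = 0" using th1[OF s x] F1(1)[OF x] h1 s gG morneg(3)[OF s x]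
      by (simp add: \<mu>_def group.is_monoid)
  next
    fix \<sigma> \<tau> \<gamma> x assume s: "\<sigma> \<in> carrier \<Gamma>" and t: "\<tau> \<in> carrier \<Gamma>" and g: "\<gamma> \<in> carrier \<Gamma>"
      and x: "x \<in> carrier P"
    have st: "\<sigma> \<otimes>\<^bsub>\<Gamma>\<^esub> \<tau> \<in> carrier \<Gamma>" and tg: "\<tau> \<otimes>\<^bsub>\<Gamma>\<^esub> \<gamma> \<in> carrier \<Gamma>"
      using s t g gG by (simp_all add: group.is_monoid monoid.m_closed)
    have as: "\<sigma> \<otimes>\<^bsub>\<Gamma>\<^esub> \<tau> \<otimes>\<^bsub>\<Gamma>\<^esub> \<gamma> = \<sigma> \<otimes>\<^bsub>\<Gamma>\<^esub> (\<tau> \<otimes>\<^bsub>\<Gamma>\<^esub> \<gamma>)"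
      using s t g gG by (simp add: group.is_monoid monoid.m_assoc)
    have X: "mf_obj (F \<gamma>) x \<in> carrier P" using mf_unf(1)[OF mf[OF g] x] .
    have Y: "mf_obj (F \<tau>) (mf_obj (F \<gamma>) x) \<in> carrier P" using mf_unf(1)[OF mf[OF t] X] .
    have obtg: "mf_obj (F (\<tau> \<otimes>\<^bsub>\<Gamma>\<^esub> \<gamma>)) x = mf_obj (F \<tau>) (mf_obj (F \<gamma>) x)"
      using mnat_unf(1)[OF thn[OF t g] x] by (simp add: mf_comp_def)
    note c = cyc[OF s t g x, unfolded vcomp_def whisk_r_def whisk_l_def mf_comp_def, simplified]
    note nm = mnat_unf(2)[OF thn[OF s t] X, of "h \<gamma>", unfolded mf_comp_def, simplified]
    show "vcomp (\<mu> (\<sigma> \<otimes>\<^bsub>\<Gamma>\<^esub> \<tau>) \<gamma>) (whisk_r (\<mu> \<sigma> \<tau>) (G \<gamma>)) x =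
          vcomp (\<mu> \<sigma> (\<tau> \<otimes>\<^bsub>\<Gamma>\<^esub> \<gamma>)) (whisk_l (G \<sigma>) (mf_comp P (G \<tau>) (G \<gamma>)) (\<mu> \<tau> \<gamma>)) x"
      unfolding vcomp_def whisk_r_def whisk_l_def mf_comp_def Gs \<mu>_def
      by (rule eq_via2[OF c nm]) (simp add: as obtg algebra_simps morneg s Y mf_unf(2)[OF mf[OF s]])
  qed (use mfG mnG in auto)
  have coh: "cohomologous \<Gamma> P act \<theta> F \<mu> G"
    unfolding cohomologous_def
  proof (intro exI[of _ "\<lambda>\<sigma> x. h \<sigma>"] conjI ballI)
    fix \<sigma> assume s: "\<sigma> \<in> carrier \<Gamma>"
    show "mnat P act (F \<sigma>) (G \<sigma>) (\<lambda>x. h \<sigma>)"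
      unfolding mnat_def Gs by (simp add: h_def algebra_simps)
  next
    fix x show "h \<one>\<^bsub>\<Gamma>\<^esub> = 0" by (rule h1)
  next
    fix \<sigma> \<tau> x assume s: "\<sigma> \<in> carrier \<Gamma>" and t: "\<tau> \<in> carrier \<Gamma>" and x: "x \<in> carrier P"
    show "vcomp (\<lambda>x. h (\<sigma> \<otimes>\<^bsub>\<Gamma>\<^esub> \<tau>)) (\<theta> \<sigma> \<tau>) x = vcomp (\<mu> \<sigma> \<tau>) (vcomp (whisk_r (\<lambda>x. h \<sigma>) (G \<tau>)) (whisk_l (F \<sigma>) (F \<tau>) (\<lambda>x. h \<tau>))) x"
      by (simp add: vcomp_def whisk_r_def whisk_l_def \<mu>_def algebra_simps)
  qed
  have es: "enough_strict \<Gamma> G" unfolding enough_strict_def Gs by simp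
  show ?thesis using fsG es coh by blast
qed

end
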